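(* Let $G_{20}$ be the graph with vertex set $\mathbb{Z}_{18}\cup\{x,y_0,y_1\}$ in which the vertices of $\mathbb{Z}_{18}$ form a clique, $x$ is adjacent to every element of $\mathbb{Z}_{18}$, $y_0$ is adjacent to exactly the even elements of $\mathbb{Z}_{18}$, $y_1$ to exactly the odd elements, and there are no edges among $x,y_0,y_1$. Consider the cyclic sequences $$L_0=(2, 7, 12, 16, 4, 6, 13, 10, y, 8, 9, 17, x, 1, 5, 3, 14, 11, 15),$$ $$L_1=(11, 13, 6, 2, 14, 12, 7, 9, 16, 10, y, 8, 3, 4, 17, x, 1, 15, 5),$$ $$L_2=(5, 16, 13, 14, 17, x, 1, 10, y, 8, 6, 15, 4, 7, 3, 9, 12, 2, 11).$$ For $\gamma\in\mathbb{Z}_{18}$, let the rotation at $\gamma$ be obtained from $L_{\gamma\bmod 3}$ by adding $\gamma$ (mod 18) to each numerical entry, leaving $x$ unchanged and replacing $y$ by $y_{\gamma \bmod 2}$. Then there exist rotations at $x$, $y_0$, $y_1$ such that the resulting rotation system is a triangular embedding of $G_{20}$ in the orientable surface $S_{22}$ of genus $22$.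
   Context: A rotation system on a simple graph assigns to each vertex a cyclic ordering of its neighbors and determines a cellular orientable embedding. An embedding is triangular if every face is a triangle. $S_k$ denotes the orientable surface of genus $k$. *)

theory Defs
  imports Main
begin

text \<open>A rotation system assigns to each vertex a list, read cyclically,
that enumerates each neighbour exactly once.\<close>

definition is_rotation_system ::
  "'v set \<Rightarrow> ('v \<Rightarrow> 'v \<Rightarrow> bool) \<Rightarrow> ('v \<Rightarrow> 'v list) \<Rightarrow> bool" where
  "is_rotation_system V adj rho \<longleftrightarrow>
     (\<forall>v\<in>V. distinct (rho v) \<and> set (rho v) = {u\<in>V. adj v u})"

definition cyc_succ :: "'v list \<Rightarrow> 'v \<Rightarrow> 'v" where
  "cyc_succ xs a = the (map_of (zip xs (rotate1 xs)) a)"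

definition darts :: "'v set \<Rightarrow> ('v \<Rightarrow> 'v \<Rightarrow> bool) \<Rightarrow> ('v \<times> 'v) set" where
  "darts V adj = {(u,v). u \<in> V \<and> v \<in> V \<and> adj u v}"

definition face_step :: "('v \<Rightarrow> 'v list) \<Rightarrow> 'v \<times> 'v \<Rightarrow> 'v \<times> 'v" where
  "face_step rho d = (snd d, cyc_succ (rho (snd d)) (fst d))"

definition face_of :: "('v \<Rightarrow> 'v list) \<Rightarrow> 'v \<times> 'v \<Rightarrow> ('v \<times> 'v) set" where
  "face_of rho d = {(face_step rho ^^ n) d | n. True}"

definition faces :: "'v set \<Rightarrow> ('v \<Rightarrow> 'v \<Rightarrow> bool) \<Rightarrow> ('v \<Rightarrow> 'v list) \<Rightarrow> ('v \<times> 'v) set set" where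
  "faces V adj rho = face_of rho ` darts V adj"

definition triangular :: "'v set \<Rightarrow> ('v \<Rightarrow> 'v \<Rightarrow> bool) \<Rightarrow> ('v \<Rightarrow> 'v list) \<Rightarrow> bool" where
  "triangular V adj rho \<longleftrightarrow> (\<forall>F\<in>faces V adj rho. card F = 3)"

definition num_edges :: "'v set \<Rightarrow> ('v \<Rightarrow> 'v \<Rightarrow> bool) \<Rightarrow> nat" where
  "num_edges V adj = card (darts V adj) div 2"

text \<open>Genus of the orientable surface of the cellular embedding given by the rotation
system, via Euler's formula  V - E + F = 2 - 2g  (the graph is connected).\<close>
definition embedding_genus :: "'v set \<Rightarrow> ('v \<Rightarrow> 'v \<Rightarrow> bool) \<Rightarrow> ('v \<Rightarrow> 'v list) \<Rightarrow> int" where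
  "embedding_genus V adj rho =
     (2 - int (card V) + int (num_edges V adj) - int (card (faces V adj rho))) div 2"

datatype vtx = Z nat | X | Y nat  \<comment> \<open>Z k for k in Z_18, X = x, Y 0 = y_0, Y 1 = y_1\<close>

definition G20_V :: "vtx set" where
  "G20_V = Z ` {0..<18} \<union> {X, Y 0, Y 1}"

fun G20_adj :: "vtx \<Rightarrow> vtx \<Rightarrow> bool" where
  "G20_adj (Z a) (Z b) = (a \<noteq> b)"
| "G20_adj (Z a) X = True"
| "G20_adj X (Z a) = True"
| "G20_adj (Z a) (Y i) = (a mod 2 = i)"
| "G20_adj (Y i) (Z a) = (a mod 2 = i)"
| "G20_adj _ _ = False"

datatype entry = N nat | Ex_x | Ey_y

definition L0 :: "entry list" where
  "L0 = [N 2, N 7, N 12, N 16, N 4, N 6, N 13, N 10, Ey_y, N 8, N 9, N 17, Ex_x, N 1, N 5, N 3, N 14, N 11, N 15]"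
definition L1 :: "entry list" where
  "L1 = [N 11, N 13, N 6, N 2, N 14, N 12, N 7, N 9, N 16, N 10, Ey_y, N 8, N 3, N 4, N 17, Ex_x, N 1, N 15, N 5]"
definition L2 :: "entry list" where
  "L2 = [N 5, N 16, N 13, N 14, N 17, Ex_x, N 1, N 10, Ey_y, N 8, N 6, N 15, N 4, N 7, N 3, N 9, N 12, N 2, N 11]"

fun shift_entry :: "nat \<Rightarrow> entry \<Rightarrow> vtx" where
  "shift_entry g (N k) = Z ((k + g) mod 18)"
| "shift_entry g Ex_x = X"
| "shift_entry g Ey_y = Y (g mod 2)"

definition base_list :: "nat \<Rightarrow> entry list" where
  "base_list g = (if g mod 3 = 0 then L0 else if g mod 3 = 1 then L1 else L2)"

definition rot_Z :: "nat \<Rightarrow> vtx list" where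
  "rot_Z g = map (shift_entry g) (base_list g)"

fun G20_rot :: "vtx list \<Rightarrow> vtx list \<Rightarrow> vtx list \<Rightarrow> vtx \<Rightarrow> vtx list" where
  "G20_rot rx ry0 ry1 (Z g) = rot_Z g"
| "G20_rot rx ry0 ry1 X = rx"
| "G20_rot rx ry0 ry1 (Y i) = (if i = 0 then ry0 else ry1)"

end

theory Submission
  imports Defs
begin

lemma face_of_3:
  assumes "(face_step rho ^^ 3) d = d"
  shows "face_of rho d = {d, face_step rho d, face_step rho (face_step rho d)}"
proof -
  let ?f = "face_step rho"
  let ?S = "{d, ?f d, ?f (?f d)}"
  have f3: "?f (?f (?f d)) = d" using assms by (simp add: numeral_3_eq_3)
  have cl: "?f x \<in> ?S" if "x \<in> ?S" for x using that f3 by auto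
  have mem: "(?f ^^ n) d \<in> ?S" for n
  proof (induction n)
    case 0 then show ?case by simp
  next
    case (Suc n) then show ?case using cl by simp
  qed
  have "d = (?f ^^ 0) d" "?f d = (?f ^^ 1) d" "?f (?f d) = (?f ^^ 2) d"
    by (simp_all add: numeral_2_eq_2)
  then show ?thesis using mem unfolding face_of_def by blast
qed

lemma cyc_succ_in:
  assumes "a \<in> set xs" shows "cyc_succ xs a \<in> set xs"
proof -
  have "length xs = length (rotate1 xs)" by simp
  then have "\<exists>y. map_of (zip xs (rotate1 xs)) a = Some y"
    using map_of_zip_is_Some[of xs "rotate1 xs" a] assms by blast
  then obtain b where b: "map_of (zip xs (rotate1 xs)) a = Some b" by blast
  then have "(a, b) \<in> set (zip xs (rotate1 xs))" by (rule map_of_SomeD)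
  then have "b \<in> set xs" by (auto dest: set_zip_rightD)
  then show ?thesis using b by (simp add: cyc_succ_def)
qed

lemma step_dart:
  assumes rs: "is_rotation_system V adj rho" and sy: "\<And>u v. adj u v \<Longrightarrow> adj v u"
    and d: "d \<in> darts V adj"
  shows "face_step rho d \<in> darts V adj"
proof -
  obtain u v where uv: "d = (u, v)" "u \<in> V" "v \<in> V" "adj u v" using d by (auto simp: darts_def)
  have "u \<in> set (rho v)" using rs uv sy unfolding is_rotation_system_def by auto
  then have "cyc_succ (rho v) u \<in> set (rho v)" by (rule cyc_succ_in)
  then show ?thesis using rs uv unfolding is_rotation_system_def darts_def face_step_def by auto
qed

lemma orbit_count:
  fixes f :: "'a \<Rightarrow> 'a"
  defines "T \<equiv> \<lambda>d. {d, f d, f (f d)}"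
  assumes fin: "finite D" and H: "\<And>d. d \<in> D \<Longrightarrow> f d \<in> D \<and> f (f (f d)) = d \<and> card (T d) = 3"
  shows "card D = 3 * card (T ` D)"
proof -
  have sub: "x \<in> T d \<Longrightarrow> d \<in> D \<Longrightarrow> T x = T d" for x d
  proof -
    assume x: "x \<in> T d" and dD: "d \<in> D"
    have 3: "f (f (f d)) = d" using H dD by blast
    then have 4: "f (f (f (f d))) = f d" by simp
    from x show "T x = T d" unfolding T_def using 3 4 by auto
  qed
  have U: "\<Union> (T ` D) = D"
  proof
    show "\<Union> (T ` D) \<subseteq> D"
    proof
      fix x assume "x \<in> \<Union> (T ` D)"
      then obtain d where d: "d \<in> D" "x \<in> T d" by blast
      have "f d \<in> D" using H[OF d(1)] by blast
      then have "f (f d) \<in> D" using H by blast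
      then show "x \<in> D" using d \<open>f d \<in> D\<close> unfolding T_def by blast
    qed
    show "D \<subseteq> \<Union> (T ` D)" unfolding T_def by blast
  qed
  have disj: "pairwise disjnt (T ` D)"
    unfolding pairwise_def disjnt_def
  proof (clarify)
    fix a b assume a: "a \<in> D" and b: "b \<in> D" and ne: "T a \<noteq> T b"
    show "T a \<inter> T b = {}"
    proof (rule ccontr)
      assume "T a \<inter> T b \<noteq> {}"
      then obtain x where xa: "x \<in> T a" and xb: "x \<in> T b" by blast
      have "T x = T a" using sub[OF xa a] .
      moreover have "T x = T b" using sub[OF xb b] .
      ultimately have "T a = T b" by simp
      then show False using ne by simp
    qed
  qed
  have finT: "\<forall>A\<in>T ` D. finite A" unfolding T_def by auto
  have "card (\<Union> (T ` D)) = sum card (T ` D)"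
    using card_Union_disjoint[OF disj] finT fin by auto
  also have "\<dots> = sum (\<lambda>_. 3) (T ` D)"
  proof (rule sum.cong)
    fix A assume "A \<in> T ` D"
    then obtain d where "d \<in> D" "A = T d" by blast
    then show "card A = 3" using H by blast
  qed simp
  also have "\<dots> = 3 * card (T ` D)" by simp
  finally show ?thesis using U by simp
qed

definition rx :: "vtx list" where
  "rx = map Z [0, 17, 16, 15, 14, 13, 12, 11, 10, 9, 8, 7, 6, 5, 4, 3, 2, 1]"
definition ry0 :: "vtx list" where
  "ry0 = map Z [0, 10, 2, 12, 4, 14, 6, 16, 8]"
definition ry1 :: "vtx list" where
  "ry1 = map Z [1, 11, 3, 13, 5, 15, 7, 17, 9]"

lemma rz_0: "rot_Z 0 = [Z 2, Z 7, Z 12, Z 16, Z 4, Z 6, Z 13, Z 10, Y 0, Z 8, Z 9, Z 17, X, Z (Suc 0), Z 5, Z 3, Z 14, Z 11, Z 15]"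
  by (simp add: rot_Z_def base_list_def L0_def L1_def L2_def)

lemma rz_1: "rot_Z (Suc 0) = [Z 12, Z 14, Z 7, Z 3, Z 15, Z 13, Z 8, Z 10, Z 17, Z 11, Y (Suc 0), Z 9, Z 4, Z 5, Z 0, X, Z 2, Z 16, Z 6]"
  by (simp add: rot_Z_def base_list_def L0_def L1_def L2_def)

lemma rz_2: "rot_Z 2 = [Z 7, Z 0, Z 15, Z 16, Z (Suc 0), X, Z 3, Z 12, Y 0, Z 10, Z 8, Z 17, Z 6, Z 9, Z 5, Z 11, Z 14, Z 4, Z 13]"
  by (simp add: rot_Z_def base_list_def L0_def L1_def L2_def)

lemma rz_3: "rot_Z 3 = [Z 5, Z 10, Z 15, Z (Suc 0), Z 7, Z 9, Z 16, Z 13, Y (Suc 0), Z 11, Z 12, Z 2, X, Z 4, Z 8, Z 6, Z 17, Z 14, Z 0]"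
  by (simp add: rot_Z_def base_list_def L0_def L1_def L2_def)

lemma rz_4: "rot_Z 4 = [Z 15, Z 17, Z 10, Z 6, Z 0, Z 16, Z 11, Z 13, Z 2, Z 14, Y 0, Z 12, Z 7, Z 8, Z 3, X, Z 5, Z (Suc 0), Z 9]"
  by (simp add: rot_Z_def base_list_def L0_def L1_def L2_def)

lemma rz_5: "rot_Z 5 = [Z 10, Z 3, Z 0, Z (Suc 0), Z 4, X, Z 6, Z 15, Y (Suc 0), Z 13, Z 11, Z 2, Z 9, Z 12, Z 8, Z 14, Z 17, Z 7, Z 16]"
  by (simp add: rot_Z_def base_list_def L0_def L1_def L2_def)

lemma rz_6: "rot_Z 6 = [Z 8, Z 13, Z 0, Z 4, Z 10, Z 12, Z (Suc 0), Z 16, Y 0, Z 14, Z 15, Z 5, X, Z 7, Z 11, Z 9, Z 2, Z 17, Z 3]"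
  by (simp add: rot_Z_def base_list_def L0_def L1_def L2_def)

lemma rz_7: "rot_Z 7 = [Z 0, Z 2, Z 13, Z 9, Z 3, Z (Suc 0), Z 14, Z 16, Z 5, Z 17, Y (Suc 0), Z 15, Z 10, Z 11, Z 6, X, Z 8, Z 4, Z 12]"
  by (simp add: rot_Z_def base_list_def L0_def L1_def L2_def)

lemma rz_8: "rot_Z 8 = [Z 13, Z 6, Z 3, Z 4, Z 7, X, Z 9, Z 0, Y 0, Z 16, Z 14, Z 5, Z 12, Z 15, Z 11, Z 17, Z 2, Z 10, Z (Suc 0)]"
  by (simp add: rot_Z_def base_list_def L0_def L1_def L2_def)

lemma rz_9: "rot_Z 9 = [Z 11, Z 16, Z 3, Z 7, Z 13, Z 15, Z 4, Z (Suc 0), Y (Suc 0), Z 17, Z 0, Z 8, X, Z 10, Z 14, Z 12, Z 5, Z 2, Z 6]"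
  by (simp add: rot_Z_def base_list_def L0_def L1_def L2_def)

lemma rz_10: "rot_Z 10 = [Z 3, Z 5, Z 16, Z 12, Z 6, Z 4, Z 17, Z (Suc 0), Z 8, Z 2, Y 0, Z 0, Z 13, Z 14, Z 9, X, Z 11, Z 7, Z 15]"
  by (simp add: rot_Z_def base_list_def L0_def L1_def L2_def)

lemma rz_11: "rot_Z 11 = [Z 16, Z 9, Z 6, Z 7, Z 10, X, Z 12, Z 3, Y (Suc 0), Z (Suc 0), Z 17, Z 8, Z 15, Z 0, Z 14, Z 2, Z 5, Z 13, Z 4]"
  by (simp add: rot_Z_def base_list_def L0_def L1_def L2_def)

lemma rz_12: "rot_Z 12 = [Z 14, Z (Suc 0), Z 6, Z 10, Z 16, Z 0, Z 7, Z 4, Y 0, Z 2, Z 3, Z 11, X, Z 13, Z 17, Z 15, Z 8, Z 5, Z 9]"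
  by (simp add: rot_Z_def base_list_def L0_def L1_def L2_def)

lemma rz_13: "rot_Z 13 = [Z 6, Z 8, Z (Suc 0), Z 15, Z 9, Z 7, Z 2, Z 4, Z 11, Z 5, Y (Suc 0), Z 3, Z 16, Z 17, Z 12, X, Z 14, Z 10, Z 0]"
  by (simp add: rot_Z_def base_list_def L0_def L1_def L2_def)

lemma rz_14: "rot_Z 14 = [Z (Suc 0), Z 12, Z 9, Z 10, Z 13, X, Z 15, Z 6, Y 0, Z 4, Z 2, Z 11, Z 0, Z 3, Z 17, Z 5, Z 8, Z 16, Z 7]"
  by (simp add: rot_Z_def base_list_def L0_def L1_def L2_def)

lemma rz_15: "rot_Z 15 = [Z 17, Z 4, Z 9, Z 13, Z (Suc 0), Z 3, Z 10, Z 7, Y (Suc 0), Z 5, Z 6, Z 14, X, Z 16, Z 2, Z 0, Z 11, Z 8, Z 12]"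
  by (simp add: rot_Z_def base_list_def L0_def L1_def L2_def)

lemma rz_16: "rot_Z 16 = [Z 9, Z 11, Z 4, Z 0, Z 12, Z 10, Z 5, Z 7, Z 14, Z 8, Y 0, Z 6, Z (Suc 0), Z 2, Z 15, X, Z 17, Z 13, Z 3]"
  by (simp add: rot_Z_def base_list_def L0_def L1_def L2_def)

lemma rz_17: "rot_Z 17 = [Z 4, Z 15, Z 12, Z 13, Z 16, X, Z 0, Z 9, Y (Suc 0), Z 7, Z 5, Z 14, Z 3, Z 6, Z 2, Z 8, Z 11, Z (Suc 0), Z 10]"
  by (simp add: rot_Z_def base_list_def L0_def L1_def L2_def)

lemmas rz_all = rz_0 rz_1 rz_2 rz_3 rz_4 rz_5 rz_6 rz_7 rz_8 rz_9 rz_10 rz_11 rz_12 rz_13 rz_14 rz_15 rz_16 rz_17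

lemma cs_0: "cyc_succ (rot_Z 0) a = the (map_of [(Z 2, Z 7), (Z 7, Z 12), (Z 12, Z 16), (Z 16, Z 4), (Z 4, Z 6), (Z 6, Z 13), (Z 13, Z 10), (Z 10, Y 0), (Y 0, Z 8), (Z 8, Z 9), (Z 9, Z 17), (Z 17, X), (X, Z (Suc 0)), (Z (Suc 0), Z 5), (Z 5, Z 3), (Z 3, Z 14), (Z 14, Z 11), (Z 11, Z 15), (Z 15, Z 2)] a)"
  unfolding cyc_succ_def rz_0 by (simp del: map_of.simps)

lemma cs_1: "cyc_succ (rot_Z (Suc 0)) a = the (map_of [(Z 12, Z 14), (Z 14, Z 7), (Z 7, Z 3), (Z 3, Z 15), (Z 15, Z 13), (Z 13, Z 8), (Z 8, Z 10), (Z 10, Z 17), (Z 17, Z 11), (Z 11, Y (Suc 0)), (Y (Suc 0), Z 9), (Z 9, Z 4), (Z 4, Z 5), (Z 5, Z 0), (Z 0, X), (X, Z 2), (Z 2, Z 16), (Z 16, Z 6), (Z 6, Z 12)] a)"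
  unfolding cyc_succ_def rz_1 by (simp del: map_of.simps)

lemma cs_2: "cyc_succ (rot_Z 2) a = the (map_of [(Z 7, Z 0), (Z 0, Z 15), (Z 15, Z 16), (Z 16, Z (Suc 0)), (Z (Suc 0), X), (X, Z 3), (Z 3, Z 12), (Z 12, Y 0), (Y 0, Z 10), (Z 10, Z 8), (Z 8, Z 17), (Z 17, Z 6), (Z 6, Z 9), (Z 9, Z 5), (Z 5, Z 11), (Z 11, Z 14), (Z 14, Z 4), (Z 4, Z 13), (Z 13, Z 7)] a)"
  unfolding cyc_succ_def rz_2 by (simp del: map_of.simps)

lemma cs_3: "cyc_succ (rot_Z 3) a = the (map_of [(Z 5, Z 10), (Z 10, Z 15), (Z 15, Z (Suc 0)), (Z (Suc 0), Z 7), (Z 7, Z 9), (Z 9, Z 16), (Z 16, Z 13), (Z 13, Y (Suc 0)), (Y (Suc 0), Z 11), (Z 11, Z 12), (Z 12, Z 2), (Z 2, X), (X, Z 4), (Z 4, Z 8), (Z 8, Z 6), (Z 6, Z 17), (Z 17, Z 14), (Z 14, Z 0), (Z 0, Z 5)] a)"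
  unfolding cyc_succ_def rz_3 by (simp del: map_of.simps)

lemma cs_4: "cyc_succ (rot_Z 4) a = the (map_of [(Z 15, Z 17), (Z 17, Z 10), (Z 10, Z 6), (Z 6, Z 0), (Z 0, Z 16), (Z 16, Z 11), (Z 11, Z 13), (Z 13, Z 2), (Z 2, Z 14), (Z 14, Y 0), (Y 0, Z 12), (Z 12, Z 7), (Z 7, Z 8), (Z 8, Z 3), (Z 3, X), (X, Z 5), (Z 5, Z (Suc 0)), (Z (Suc 0), Z 9), (Z 9, Z 15)] a)"
  unfolding cyc_succ_def rz_4 by (simp del: map_of.simps)

lemma cs_5: "cyc_succ (rot_Z 5) a = the (map_of [(Z 10, Z 3), (Z 3, Z 0), (Z 0, Z (Suc 0)), (Z (Suc 0), Z 4), (Z 4, X), (X, Z 6), (Z 6, Z 15), (Z 15, Y (Suc 0)), (Y (Suc 0), Z 13), (Z 13, Z 11), (Z 11, Z 2), (Z 2, Z 9), (Z 9, Z 12), (Z 12, Z 8), (Z 8, Z 14), (Z 14, Z 17), (Z 17, Z 7), (Z 7, Z 16), (Z 16, Z 10)] a)"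
  unfolding cyc_succ_def rz_5 by (simp del: map_of.simps)

lemma cs_6: "cyc_succ (rot_Z 6) a = the (map_of [(Z 8, Z 13), (Z 13, Z 0), (Z 0, Z 4), (Z 4, Z 10), (Z 10, Z 12), (Z 12, Z (Suc 0)), (Z (Suc 0), Z 16), (Z 16, Y 0), (Y 0, Z 14), (Z 14, Z 15), (Z 15, Z 5), (Z 5, X), (X, Z 7), (Z 7, Z 11), (Z 11, Z 9), (Z 9, Z 2), (Z 2, Z 17), (Z 17, Z 3), (Z 3, Z 8)] a)"
  unfolding cyc_succ_def rz_6 by (simp del: map_of.simps)

lemma cs_7: "cyc_succ (rot_Z 7) a = the (map_of [(Z 0, Z 2), (Z 2, Z 13), (Z 13, Z 9), (Z 9, Z 3), (Z 3, Z (Suc 0)), (Z (Suc 0), Z 14), (Z 14, Z 16), (Z 16, Z 5), (Z 5, Z 17), (Z 17, Y (Suc 0)), (Y (Suc 0), Z 15), (Z 15, Z 10), (Z 10, Z 11), (Z 11, Z 6), (Z 6, X), (X, Z 8), (Z 8, Z 4), (Z 4, Z 12), (Z 12, Z 0)] a)"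
  unfolding cyc_succ_def rz_7 by (simp del: map_of.simps)

lemma cs_8: "cyc_succ (rot_Z 8) a = the (map_of [(Z 13, Z 6), (Z 6, Z 3), (Z 3, Z 4), (Z 4, Z 7), (Z 7, X), (X, Z 9), (Z 9, Z 0), (Z 0, Y 0), (Y 0, Z 16), (Z 16, Z 14), (Z 14, Z 5), (Z 5, Z 12), (Z 12, Z 15), (Z 15, Z 11), (Z 11, Z 17), (Z 17, Z 2), (Z 2, Z 10), (Z 10, Z (Suc 0)), (Z (Suc 0), Z 13)] a)"
  unfolding cyc_succ_def rz_8 by (simp del: map_of.simps)

lemma cs_9: "cyc_succ (rot_Z 9) a = the (map_of [(Z 11, Z 16), (Z 16, Z 3), (Z 3, Z 7), (Z 7, Z 13), (Z 13, Z 15), (Z 15, Z 4), (Z 4, Z (Suc 0)), (Z (Suc 0), Y (Suc 0)), (Y (Suc 0), Z 17), (Z 17, Z 0), (Z 0, Z 8), (Z 8, X), (X, Z 10), (Z 10, Z 14), (Z 14, Z 12), (Z 12, Z 5), (Z 5, Z 2), (Z 2, Z 6), (Z 6, Z 11)] a)"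
  unfolding cyc_succ_def rz_9 by (simp del: map_of.simps)

lemma cs_10: "cyc_succ (rot_Z 10) a = the (map_of [(Z 3, Z 5), (Z 5, Z 16), (Z 16, Z 12), (Z 12, Z 6), (Z 6, Z 4), (Z 4, Z 17), (Z 17, Z (Suc 0)), (Z (Suc 0), Z 8), (Z 8, Z 2), (Z 2, Y 0), (Y 0, Z 0), (Z 0, Z 13), (Z 13, Z 14), (Z 14, Z 9), (Z 9, X), (X, Z 11), (Z 11, Z 7), (Z 7, Z 15), (Z 15, Z 3)] a)"
  unfolding cyc_succ_def rz_10 by (simp del: map_of.simps)

lemma cs_11: "cyc_succ (rot_Z 11) a = the (map_of [(Z 16, Z 9), (Z 9, Z 6), (Z 6, Z 7), (Z 7, Z 10), (Z 10, X), (X, Z 12), (Z 12, Z 3), (Z 3, Y (Suc 0)), (Y (Suc 0), Z (Suc 0)), (Z (Suc 0), Z 17), (Z 17, Z 8), (Z 8, Z 15), (Z 15, Z 0), (Z 0, Z 14), (Z 14, Z 2), (Z 2, Z 5), (Z 5, Z 13), (Z 13, Z 4), (Z 4, Z 16)] a)"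
  unfolding cyc_succ_def rz_11 by (simp del: map_of.simps)

lemma cs_12: "cyc_succ (rot_Z 12) a = the (map_of [(Z 14, Z (Suc 0)), (Z (Suc 0), Z 6), (Z 6, Z 10), (Z 10, Z 16), (Z 16, Z 0), (Z 0, Z 7), (Z 7, Z 4), (Z 4, Y 0), (Y 0, Z 2), (Z 2, Z 3), (Z 3, Z 11), (Z 11, X), (X, Z 13), (Z 13, Z 17), (Z 17, Z 15), (Z 15, Z 8), (Z 8, Z 5), (Z 5, Z 9), (Z 9, Z 14)] a)"
  unfolding cyc_succ_def rz_12 by (simp del: map_of.simps)

lemma cs_13: "cyc_succ (rot_Z 13) a = the (map_of [(Z 6, Z 8), (Z 8, Z (Suc 0)), (Z (Suc 0), Z 15), (Z 15, Z 9), (Z 9, Z 7), (Z 7, Z 2), (Z 2, Z 4), (Z 4, Z 11), (Z 11, Z 5), (Z 5, Y (Suc 0)), (Y (Suc 0), Z 3), (Z 3, Z 16), (Z 16, Z 17), (Z 17, Z 12), (Z 12, X), (X, Z 14), (Z 14, Z 10), (Z 10, Z 0), (Z 0, Z 6)] a)"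
  unfolding cyc_succ_def rz_13 by (simp del: map_of.simps)

lemma cs_14: "cyc_succ (rot_Z 14) a = the (map_of [(Z (Suc 0), Z 12), (Z 12, Z 9), (Z 9, Z 10), (Z 10, Z 13), (Z 13, X), (X, Z 15), (Z 15, Z 6), (Z 6, Y 0), (Y 0, Z 4), (Z 4, Z 2), (Z 2, Z 11), (Z 11, Z 0), (Z 0, Z 3), (Z 3, Z 17), (Z 17, Z 5), (Z 5, Z 8), (Z 8, Z 16), (Z 16, Z 7), (Z 7, Z (Suc 0))] a)"
  unfolding cyc_succ_def rz_14 by (simp del: map_of.simps)

lemma cs_15: "cyc_succ (rot_Z 15) a = the (map_of [(Z 17, Z 4), (Z 4, Z 9), (Z 9, Z 13), (Z 13, Z (Suc 0)), (Z (Suc 0), Z 3), (Z 3, Z 10), (Z 10, Z 7), (Z 7, Y (Suc 0)), (Y (Suc 0), Z 5), (Z 5, Z 6), (Z 6, Z 14), (Z 14, X), (X, Z 16), (Z 16, Z 2), (Z 2, Z 0), (Z 0, Z 11), (Z 11, Z 8), (Z 8, Z 12), (Z 12, Z 17)] a)"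
  unfolding cyc_succ_def rz_15 by (simp del: map_of.simps)

lemma cs_16: "cyc_succ (rot_Z 16) a = the (map_of [(Z 9, Z 11), (Z 11, Z 4), (Z 4, Z 0), (Z 0, Z 12), (Z 12, Z 10), (Z 10, Z 5), (Z 5, Z 7), (Z 7, Z 14), (Z 14, Z 8), (Z 8, Y 0), (Y 0, Z 6), (Z 6, Z (Suc 0)), (Z (Suc 0), Z 2), (Z 2, Z 15), (Z 15, X), (X, Z 17), (Z 17, Z 13), (Z 13, Z 3), (Z 3, Z 9)] a)"
  unfolding cyc_succ_def rz_16 by (simp del: map_of.simps)

lemma cs_17: "cyc_succ (rot_Z 17) a = the (map_of [(Z 4, Z 15), (Z 15, Z 12), (Z 12, Z 13), (Z 13, Z 16), (Z 16, X), (X, Z 0), (Z 0, Z 9), (Z 9, Y (Suc 0)), (Y (Suc 0), Z 7), (Z 7, Z 5), (Z 5, Z 14), (Z 14, Z 3), (Z 3, Z 6), (Z 6, Z 2), (Z 2, Z 8), (Z 8, Z 11), (Z 11, Z (Suc 0)), (Z (Suc 0), Z 10), (Z 10, Z 4)] a)"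
  unfolding cyc_succ_def rz_17 by (simp del: map_of.simps)

lemma cs_x: "cyc_succ (rx) a = the (map_of [(Z 0, Z 17), (Z 17, Z 16), (Z 16, Z 15), (Z 15, Z 14), (Z 14, Z 13), (Z 13, Z 12), (Z 12, Z 11), (Z 11, Z 10), (Z 10, Z 9), (Z 9, Z 8), (Z 8, Z 7), (Z 7, Z 6), (Z 6, Z 5), (Z 5, Z 4), (Z 4, Z 3), (Z 3, Z 2), (Z 2, Z (Suc 0)), (Z (Suc 0), Z 0)] a)"
  unfolding cyc_succ_def rx_def by (simp del: map_of.simps)

lemma cs_y0: "cyc_succ (ry0) a = the (map_of [(Z 0, Z 10), (Z 10, Z 2), (Z 2, Z 12), (Z 12, Z 4), (Z 4, Z 14), (Z 14, Z 6), (Z 6, Z 16), (Z 16, Z 8), (Z 8, Z 0)] a)"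
  unfolding cyc_succ_def ry0_def by (simp del: map_of.simps)

lemma cs_y1: "cyc_succ (ry1) a = the (map_of [(Z (Suc 0), Z 11), (Z 11, Z 3), (Z 3, Z 13), (Z 13, Z 5), (Z 5, Z 15), (Z 15, Z 7), (Z 7, Z 17), (Z 17, Z 9), (Z 9, Z (Suc 0))] a)"
  unfolding cyc_succ_def ry1_def by (simp del: map_of.simps)

lemmas cs_all = cs_0 cs_1 cs_2 cs_3 cs_4 cs_5 cs_6 cs_7 cs_8 cs_9 cs_10 cs_11 cs_12 cs_13 cs_14 cs_15 cs_16 cs_17 cs_x cs_y0 cs_y1
definition Vl :: "vtx list" where
  "Vl = [Z 0, Z (Suc 0), Z 2, Z 3, Z 4, Z 5, Z 6, Z 7, Z 8, Z 9, Z 10, Z 11, Z 12, Z 13, Z 14, Z 15, Z 16, Z 17, X, Y 0, Y (Suc 0)]"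

definition dl :: "(vtx \<times> vtx) list" where
  "dl = filter (\<lambda>(u,v). G20_adj u v) (List.product Vl Vl)"

lemma V_eq: "G20_V = set Vl"
  unfolding G20_V_def Vl_def by code_simp

lemma darts_eq: "darts G20_V G20_adj = set dl"
  unfolding darts_def V_eq dl_def by auto

lemma Vl_dist: "distinct Vl" by (simp add: Vl_def)

lemma dl_len: "length dl = 378"
  by (simp add: dl_def Vl_def)

lemma card_darts: "card (darts G20_V G20_adj) = 378"
proof -
  have "distinct dl" unfolding dl_def by (rule distinct_filter, rule distinct_product[OF Vl_dist Vl_dist])
  then show ?thesis unfolding darts_eq using dl_len by (simp add: distinct_card)
qed

lemma card_V: "card G20_V = 21"
  unfolding V_eq using Vl_dist by (simp add: distinct_card Vl_def)

lemma adj_sym: "G20_adj u v \<Longrightarrow> G20_adj v u"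
  by (cases u; cases v; auto)

lemma rot_ok: "is_rotation_system G20_V G20_adj (G20_rot rx ry0 ry1)"
  unfolding is_rotation_system_def V_eq
  by (simp add: Vl_def rz_all rx_def ry0_def ry1_def; safe; simp)

lemma main_check: "\<forall>u\<in>set Vl. \<forall>v\<in>set Vl. G20_adj u v \<longrightarrow>
   (let f = face_step (G20_rot rx ry0 ry1); d = (u,v) in f (f (f d)) = d \<and> distinct [d, f d, f (f d)])"
  by (simp add: Vl_def face_step_def cs_all Let_def)

theorem mainTheorem3:
  shows "\<exists>rx ry0 ry1.
     is_rotation_system G20_V G20_adj (G20_rot rx ry0 ry1) \<and>
     triangular G20_V G20_adj (G20_rot rx ry0 ry1) \<and>
     embedding_genus G20_V G20_adj (G20_rot rx ry0 ry1) = 22"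
proof (intro exI conjI)
  let ?rho = "G20_rot rx ry0 ry1"
  let ?f = "face_step ?rho"
  let ?T = "\<lambda>d. {d, ?f d, ?f (?f d)}"
  let ?D = "darts G20_V G20_adj"
  have H: "?f (?f (?f d)) = d \<and> card (?T d) = 3" if "d \<in> ?D" for d
  proof -
    from that obtain u v where uv: "d = (u,v)" "u \<in> G20_V" "v \<in> G20_V" "G20_adj u v"
      unfolding darts_def by blast
    then have "u \<in> set Vl" "v \<in> set Vl" by (simp_all only: V_eq)
    then have "?f (?f (?f d)) = d \<and> distinct [d, ?f d, ?f (?f d)]"
      using main_check uv by (auto simp: Let_def)
    then show ?thesis by (simp add: distinct_card[of "[d, ?f d, ?f (?f d)]", simplified])
  qed
  have F: "faces G20_V G20_adj ?rho = ?T ` ?D"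
    unfolding faces_def
    by (rule image_cong[OF refl], rule face_of_3) (use H in \<open>simp add: numeral_3_eq_3\<close>)
  show "is_rotation_system G20_V G20_adj ?rho" by (rule rot_ok)
  show "triangular G20_V G20_adj ?rho"
    unfolding triangular_def F using H by auto
  have fin: "finite ?D" unfolding darts_eq by simp
  have "card ?D = 3 * card (?T ` ?D)"
    by (rule orbit_count[OF fin]) (use H step_dart[OF rot_ok adj_sym] in auto)
  then have cF: "card (faces G20_V G20_adj ?rho) = 126" using card_darts F by simp
  show "embedding_genus G20_V G20_adj ?rho = 22"
    unfolding embedding_genus_def num_edges_def cF card_darts card_V by simp
qed

end
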